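(* Let ${\mathbf T}$ be a thinning matrix such that ${\mathbf T}_{n,n}>0$ and ${\mathbf T}_{n,n-1}>0$ for all $n\in\mathbb N$. Let $N$ be a random variable with law $\nu$ on $\mathbb N_0$ such that, if $\nu_{n_0}=0$ for some $n_0$, then $\nu_n=0$ for all $n\ge n_0$. Let ${\mathbf Q}$ be the corresponding condensation matrix. Then for all non-negative functions $g$ on $\mathbb N_0$, $$\mathbb E\Big[g(N)\,\frac{{\mathbf T}_{N,N-1}}{{\mathbf T}_{N-1,N-1}}\Big]=\mathbb E\Big[g(N+1)\,\frac{{\mathbf Q}_{N,N+1}}{{\mathbf Q}_{N,N}}\Big],$$ with the convention that $\frac{{\mathbf T}_{0,-1}}{{\mathbf T}_{-1,-1}}=0$.
   Context: A thinning matrix is a stochastic matrix ${\mathbf T}=({\mathbf T}_{n,k})_{n,k\in\mathbb N_0}$ with ${\mathbf T}_{n,k}=0$ for $k>n$. Let $\nu'=\nu{\mathbf T}$, i.e. $\nu'_k=\sum_n\nu_n{\mathbf T}_{n,k}$. The condensation matrix corresponding to $\nu$ and ${\mathbf T}$ is defined as follows. Let $N_\ast$ have conditional law ${\mathbf T}_{N,\cdot}$ given $N$. Let $\Upsilon$ be a stochastic matrix with $\mathbb E\,g(N_\ast,N-N_\ast)=\sum_{k,l}\nu'_k\Upsilon_{k,l}g(k,l)$ for all non-negative $g$. Then ${\mathbf Q}_{k,n}=\Upsilon_{k,n-k}$ for $k\le n$ and ${\mathbf Q}_{k,n}=0$ for $k>n$. Equivalently, ${\mathbf Q}$ is a stochastic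 matrix satisfying $\nu'_k{\mathbf Q}_{k,n}=\nu_n{\mathbf T}_{n,k}$ for all $k,n$. *)

theory Defs
  imports "HOL-Probability.Probability"
begin

definition stochastic_matrix :: "(nat \<Rightarrow> nat \<Rightarrow> real) \<Rightarrow> bool" where
  "stochastic_matrix M \<longleftrightarrow> (\<forall>n k. 0 \<le> M n k) \<and> (\<forall>n. (\<lambda>k. M n k) sums 1)"

definition thinning_matrix :: "(nat \<Rightarrow> nat \<Rightarrow> real) \<Rightarrow> bool" where
  "thinning_matrix T \<longleftrightarrow> stochastic_matrix T \<and> (\<forall>n k. n < k \<longrightarrow> T n k = 0)"

definition thinned_law :: "nat pmf \<Rightarrow> (nat \<Rightarrow> nat \<Rightarrow> real) \<Rightarrow> nat \<Rightarrow> real" where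
  "thinned_law \<nu> T k = (\<Sum>n. pmf \<nu> n * T n k)"

definition condensation_matrix ::
  "nat pmf \<Rightarrow> (nat \<Rightarrow> nat \<Rightarrow> real) \<Rightarrow> (nat \<Rightarrow> nat \<Rightarrow> real) \<Rightarrow> bool" where
  "condensation_matrix \<nu> T Q \<longleftrightarrow> stochastic_matrix Q \<and> (\<forall>k n. n < k \<longrightarrow> Q k n = 0) \<and>
     (\<forall>k n. thinned_law \<nu> T k * Q k n = pmf \<nu> n * T n k)"

end

theory Submission
  imports Defs
begin

theorem mainTheorem2:
  fixes T Q :: "nat \<Rightarrow> nat \<Rightarrow> real" and \<nu> :: "nat pmf" and g :: "nat \<Rightarrow> real"
  assumes "thinning_matrix T"
    and "\<forall>n\<ge>1. 0 < T n n \<and> 0 < T n (n - 1)"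
    and "\<forall>n0. pmf \<nu> n0 = 0 \<longrightarrow> (\<forall>n\<ge>n0. pmf \<nu> n = 0)"
    and "condensation_matrix \<nu> T Q"
    and "\<forall>n. 0 \<le> g n"
  shows "(\<integral>\<^sup>+ n. ennreal (g n * (if n = 0 then 0 else T n (n - 1) / T (n - 1) (n - 1))) \<partial>measure_pmf \<nu>)
       = (\<integral>\<^sup>+ n. ennreal (g (n + 1) * (Q n (n + 1) / Q n n)) \<partial>measure_pmf \<nu>)"
proof -
  let ?p = "pmf \<nu>"
  have Tnn: "\<And>n k. 0 \<le> T n k" and Tsum: "\<And>n. (\<lambda>k. T n k) sums 1"
    and Tz: "\<And>n k. n < k \<Longrightarrow> T n k = 0"
    using assms(1) unfolding thinning_matrix_def stochastic_matrix_def by auto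
  have Qnn: "\<And>n k. 0 \<le> Q n k" and Qeq: "\<And>k n. thinned_law \<nu> T k * Q k n = ?p n * T n k"
    using assms(4) unfolding condensation_matrix_def stochastic_matrix_def by auto
  have T1: "\<And>n k. T n k \<le> 1"
  proof -
    fix n k
    have "sum (T n) {k} \<le> suminf (T n)"
      by (rule sum_le_suminf) (use Tsum Tnn summable_def in \<open>auto simp: sums_iff\<close>)
    then show "T n k \<le> 1" using Tsum by (simp add: sums_iff)
  qed
  have T00: "T 0 0 = 1"
  proof -
    have e: "(\<lambda>k. if k = 0 then T 0 k else 0) = T 0" using Tz by auto
    have "(\<lambda>k. if k = 0 then T 0 k else 0) sums T 0 0" by (rule sums_single)
    then have "(\<lambda>k. T 0 k) sums T 0 0" unfolding e .
    then show ?thesis using Tsum sums_unique2 by blast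
  qed
  have Tpos: "\<And>m. 0 < T m m" using assms(2) T00 by (metis less_one not_less zero_less_one)
  have psum: "summable ?p"
    using pmf_abs_summable[of \<nu> UNIV] abs_summable_on_nat_iff'[of ?p] by simp
  have key: "\<And>m. ennreal (?p (Suc m)) * ennreal (g (Suc m) * (T (Suc m) m / T m m))
     = ennreal (?p m) * ennreal (g (m + 1) * (Q m (m + 1) / Q m m))"
  proof -
    fix m
    show "?thesis m"
    proof (cases "?p m = 0")
      case True
      then have "?p (Suc m) = 0" using assms(3) by auto
      then show ?thesis using True by simp
    next
      case False
      then have pm: "?p m > 0" using pmf_nonneg[of \<nu> m] by linarith
      have sm: "summable (\<lambda>n. ?p n * T n m)"
        by (rule summable_comparison_test[OF _ psum])
           (use T1 Tnn pmf_nonneg in \<open>auto intro!: exI[of _ 0] mult_left_le\<close>)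
      have "sum (\<lambda>n. ?p n * T n m) {m} \<le> thinned_law \<nu> T m"
        unfolding thinned_law_def
        by (rule sum_le_suminf[OF sm]) (auto simp: Tnn)
      moreover have "?p m * T m m > 0" using pm Tpos by simp
      ultimately have L: "thinned_law \<nu> T m > 0" by simp
      have q1: "Q m (m+1) = ?p (Suc m) * T (Suc m) m / thinned_law \<nu> T m"
        using Qeq[of m "m+1"] L by (simp add: field_simps)
      have q2: "Q m m = ?p m * T m m / thinned_law \<nu> T m"
        using Qeq[of m m] L by (simp add: field_simps)
      have r: "Q m (m + 1) / Q m m = ?p (Suc m) * T (Suc m) m / (?p m * T m m)"
        using L unfolding q1 q2 by (simp add: field_simps)
      have "?p (Suc m) * (g (Suc m) * (T (Suc m) m / T m m))
          = ?p m * (g (m + 1) * (Q m (m + 1) / Q m m))"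
        unfolding r using pm Tpos[of m] by (simp add: field_simps)
      then show ?thesis
        using assms(5) Tnn Qnn pmf_nonneg
        by (simp add: ennreal_mult'[symmetric] ennreal_mult[symmetric])
    qed
  qed
  define A where "A n = ennreal (?p n) * ennreal (g n * (if n = 0 then 0 else T n (n - 1) / T (n - 1) (n - 1)))" for n
  have A0: "A 0 = 0" by (simp add: A_def)
  have "(\<lambda>n. A (Suc n)) sums (\<Sum>n. A (Suc n))" by (rule summable_sums) (rule summableI)
  then have "A sums ((\<Sum>n. A (Suc n)) + A 0)" by (rule sums_Suc)
  then have AS: "suminf A = (\<Sum>n. A (Suc n))" using A0 by (simp add: sums_iff)
  have "(\<integral>\<^sup>+ n. ennreal (g n * (if n = 0 then 0 else T n (n - 1) / T (n - 1) (n - 1))) \<partial>measure_pmf \<nu>)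
      = suminf A"
    by (simp add: nn_integral_measure_pmf nn_integral_count_space_nat A_def[abs_def])
  also have "\<dots> = (\<Sum>n. A (Suc n))" by (rule AS)
  also have "\<dots> = (\<Sum>n. ennreal (?p n) * ennreal (g (n + 1) * (Q n (n + 1) / Q n n)))"
    using key by (simp add: A_def)
  also have "\<dots> = (\<integral>\<^sup>+ n. ennreal (g (n + 1) * (Q n (n + 1) / Q n n)) \<partial>measure_pmf \<nu>)"
    by (simp add: nn_integral_measure_pmf nn_integral_count_space_nat)
  finally show ?thesis .
qed

end
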